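(* Let $k$ be a field, $A,B$ abelian groups, $R$ an $A$-graded and $S$ a $B$-graded finite-dimensional Frobenius $k$-algebra with forms $\langle-,-\rangle_R$, $\langle-,-\rangle_S$, and $t:A\otimes B\to k^\times$ a bicharacter. Define on $R\otimes^tS$, for homogeneous $r,r'\in R$, $s,s'\in S$, $$\langle r\otimes s,r'\otimes s'\rangle=t(|r'|,|s|)\langle r,r'\rangle_R\langle s,s'\rangle_S,$$ extended bilinearly. Then $\langle-,-\rangle$ makes $R\otimes^tS$ a Frobenius algebra.
   Context: $|r|$ denotes the degree of a homogeneous element. The twisted tensor product $R\otimes^tS$ is the vector space $R\otimes S$ with multiplication $(r\otimes s)(r'\otimes s')=t(|r'|,|s|)\,rr'\otimes ss'$ for homogeneous elements. A Frobenius algebra is a finite-dimensional algebra with a nondegenerate bilinear form satisfying $\langle xy,z\rangle=\langle x,yz\rangle$. *)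

theory Defs
  imports Main
begin

text \<open>A finite-dimensional k-algebra is modelled in coordinates w.r.t. a basis indexed by a
finite type 'i: elements are functions 'i \<Rightarrow> 'k, multiplication is given by structure
constants m i j l (e_i e_j = sum_l m i j l e_l), u is the unit element.
An A-grading is given by a homogeneous basis: deg i is the degree of e_i.\<close>

definition alg_mult :: "('i::finite \<Rightarrow> 'i \<Rightarrow> 'i \<Rightarrow> 'k::field) \<Rightarrow> ('i \<Rightarrow> 'k) \<Rightarrow> ('i \<Rightarrow> 'k) \<Rightarrow> ('i \<Rightarrow> 'k)" where
  "alg_mult m x y = (\<lambda>l. \<Sum>i\<in>UNIV. \<Sum>j\<in>UNIV. x i * y j * m i j l)"

definition is_algebra :: "('i::finite \<Rightarrow> 'i \<Rightarrow> 'i \<Rightarrow> 'k::field) \<Rightarrow> ('i \<Rightarrow> 'k) \<Rightarrow> bool" where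
  "is_algebra m u \<longleftrightarrow>
     (\<forall>x y z. alg_mult m (alg_mult m x y) z = alg_mult m x (alg_mult m y z)) \<and>
     (\<forall>x. alg_mult m u x = x \<and> alg_mult m x u = x)"

definition is_graded_algebra ::
  "('i::finite \<Rightarrow> 'i \<Rightarrow> 'i \<Rightarrow> 'k::field) \<Rightarrow> ('i \<Rightarrow> 'k) \<Rightarrow> ('i \<Rightarrow> 'a::ab_group_add) \<Rightarrow> bool" where
  "is_graded_algebra m u deg \<longleftrightarrow> is_algebra m u \<and>
     (\<forall>i j l. m i j l \<noteq> 0 \<longrightarrow> deg l = deg i + deg j)"

definition bilin_form :: "('i::finite \<Rightarrow> 'i \<Rightarrow> 'k::field) \<Rightarrow> ('i \<Rightarrow> 'k) \<Rightarrow> ('i \<Rightarrow> 'k) \<Rightarrow> 'k" where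
  "bilin_form g x y = (\<Sum>i\<in>UNIV. \<Sum>j\<in>UNIV. x i * y j * g i j)"

definition nondegenerate :: "('i::finite \<Rightarrow> 'i \<Rightarrow> 'k::field) \<Rightarrow> bool" where
  "nondegenerate g \<longleftrightarrow>
     (\<forall>x. (\<forall>y. bilin_form g x y = 0) \<longrightarrow> x = (\<lambda>_. 0)) \<and>
     (\<forall>y. (\<forall>x. bilin_form g x y = 0) \<longrightarrow> y = (\<lambda>_. 0))"

definition frobenius :: "('i::finite \<Rightarrow> 'i \<Rightarrow> 'i \<Rightarrow> 'k::field) \<Rightarrow> ('i \<Rightarrow> 'k) \<Rightarrow> ('i \<Rightarrow> 'i \<Rightarrow> 'k) \<Rightarrow> bool" where
  "frobenius m u g \<longleftrightarrow> is_algebra m u \<and> nondegenerate g \<and>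
     (\<forall>x y z. bilin_form g (alg_mult m x y) z = bilin_form g x (alg_mult m y z))"

definition bicharacter :: "('a::ab_group_add \<Rightarrow> 'b::ab_group_add \<Rightarrow> 'k::field) \<Rightarrow> bool" where
  "bicharacter t \<longleftrightarrow> (\<forall>a b. t a b \<noteq> 0) \<and>
     (\<forall>a a' b. t (a + a') b = t a b * t a' b) \<and>
     (\<forall>a b b'. t a (b + b') = t a b * t a b')"

text \<open>Twisted tensor product R \<otimes>^t S on the basis e_i \<otimes> f_j (homogeneous), extended bilinearly:
(e_i \<otimes> f_j)(e_i' \<otimes> f_j') = t(|e_i'|,|f_j|) e_i e_i' \<otimes> f_j f_j'.\<close>
definition twisted_mult ::
  "('a::ab_group_add \<Rightarrow> 'b::ab_group_add \<Rightarrow> 'k::field) \<Rightarrow> ('i \<Rightarrow> 'a) \<Rightarrow> ('j \<Rightarrow> 'b) \<Rightarrow>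
   ('i \<Rightarrow> 'i \<Rightarrow> 'i \<Rightarrow> 'k) \<Rightarrow> ('j \<Rightarrow> 'j \<Rightarrow> 'j \<Rightarrow> 'k) \<Rightarrow>
   ('i \<times> 'j \<Rightarrow> 'i \<times> 'j \<Rightarrow> 'i \<times> 'j \<Rightarrow> 'k)" where
  "twisted_mult t degR degS mR mS =
     (\<lambda>(i, j) (i', j') (l, n). t (degR i') (degS j) * mR i i' l * mS j j' n)"

definition tensor_unit :: "('i \<Rightarrow> 'k::field) \<Rightarrow> ('j \<Rightarrow> 'k) \<Rightarrow> ('i \<times> 'j \<Rightarrow> 'k)" where
  "tensor_unit uR uS = (\<lambda>(i, j). uR i * uS j)"

definition twisted_form ::
  "('a::ab_group_add \<Rightarrow> 'b::ab_group_add \<Rightarrow> 'k::field) \<Rightarrow> ('i \<Rightarrow> 'a) \<Rightarrow> ('j \<Rightarrow> 'b) \<Rightarrow>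
   ('i \<Rightarrow> 'i \<Rightarrow> 'k) \<Rightarrow> ('j \<Rightarrow> 'j \<Rightarrow> 'k) \<Rightarrow> ('i \<times> 'j \<Rightarrow> 'i \<times> 'j \<Rightarrow> 'k)" where
  "twisted_form t degR degS gR gS =
     (\<lambda>(i, j) (i', j'). t (degR i') (degS j) * gR i i' * gS j j')"

end

theory Submission imports Defs begin

lemma sum_if_out: "(\<Sum>b\<in>S. if P then g b else 0) = (if P then (\<Sum>b\<in>S. g b) else 0)"
  by simp

definition dl :: "'i \<Rightarrow> 'i \<Rightarrow> 'k::field" where "dl i = (\<lambda>a. if a = i then 1 else 0)"

lemmas collapse = dl_def if_distrib[where f="\<lambda>x. x * _"] if_distrib[where f="\<lambda>x. _ * x"] sum_if_out

lemma sum_pair: "(\<Sum>p\<in>(UNIV::('a::finite \<times> 'b::finite) set). f p) = (\<Sum>a\<in>UNIV. \<Sum>b\<in>UNIV. f (a,b))"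
  by (simp add: sum.cartesian_product)

lemma assocL: "alg_mult m (alg_mult m x y) z n = (\<Sum>i\<in>UNIV. \<Sum>j\<in>UNIV. \<Sum>k\<in>UNIV. x i * y j * z k * (\<Sum>l\<in>UNIV. m i j l * m l k n))"
proof -
  have "alg_mult m (alg_mult m x y) z n = (\<Sum>l\<in>UNIV. \<Sum>k\<in>UNIV. \<Sum>i\<in>UNIV. \<Sum>j\<in>UNIV. x i * y j * z k * (m i j l * m l k n))"
    unfolding alg_mult_def by (simp add: sum_distrib_left sum_distrib_right mult_ac)
  also have "\<dots> = (\<Sum>k\<in>UNIV. \<Sum>l\<in>UNIV. \<Sum>i\<in>UNIV. \<Sum>j\<in>UNIV. x i * y j * z k * (m i j l * m l k n))"
    by (rule sum.swap)
  also have "\<dots> = (\<Sum>k\<in>UNIV. \<Sum>i\<in>UNIV. \<Sum>l\<in>UNIV. \<Sum>j\<in>UNIV. x i * y j * z k * (m i j l * m l k n))"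
    by (rule sum.cong[OF refl], rule sum.swap)
  also have "\<dots> = (\<Sum>k\<in>UNIV. \<Sum>i\<in>UNIV. \<Sum>j\<in>UNIV. \<Sum>l\<in>UNIV. x i * y j * z k * (m i j l * m l k n))"
    by (rule sum.cong[OF refl], rule sum.cong[OF refl], rule sum.swap)
  also have "\<dots> = (\<Sum>i\<in>UNIV. \<Sum>k\<in>UNIV. \<Sum>j\<in>UNIV. \<Sum>l\<in>UNIV. x i * y j * z k * (m i j l * m l k n))"
    by (rule sum.swap)
  also have "\<dots> = (\<Sum>i\<in>UNIV. \<Sum>j\<in>UNIV. \<Sum>k\<in>UNIV. \<Sum>l\<in>UNIV. x i * y j * z k * (m i j l * m l k n))"
    by (rule sum.cong[OF refl], rule sum.swap)
  finally show ?thesis by (simp add: sum_distrib_left)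
qed

lemma assocR: "alg_mult m x (alg_mult m y z) n = (\<Sum>i\<in>UNIV. \<Sum>j\<in>UNIV. \<Sum>k\<in>UNIV. x i * y j * z k * (\<Sum>l\<in>UNIV. m j k l * m i l n))"
proof -
  have "alg_mult m x (alg_mult m y z) n = (\<Sum>i\<in>UNIV. \<Sum>l\<in>UNIV. \<Sum>j\<in>UNIV. \<Sum>k\<in>UNIV. x i * y j * z k * (m j k l * m i l n))"
    unfolding alg_mult_def by (simp add: sum_distrib_left sum_distrib_right mult_ac)
  also have "\<dots> = (\<Sum>i\<in>UNIV. \<Sum>j\<in>UNIV. \<Sum>l\<in>UNIV. \<Sum>k\<in>UNIV. x i * y j * z k * (m j k l * m i l n))"
    by (rule sum.cong[OF refl], rule sum.swap)
  also have "\<dots> = (\<Sum>i\<in>UNIV. \<Sum>j\<in>UNIV. \<Sum>k\<in>UNIV. \<Sum>l\<in>UNIV. x i * y j * z k * (m j k l * m i l n))"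
    by (rule sum.cong[OF refl], rule sum.cong[OF refl], rule sum.swap)
  finally show ?thesis by (simp add: sum_distrib_left)
qed

lemma frobL: "bilin_form g (alg_mult m x y) z = (\<Sum>i\<in>UNIV. \<Sum>j\<in>UNIV. \<Sum>k\<in>UNIV. x i * y j * z k * (\<Sum>l\<in>UNIV. m i j l * g l k))"
proof -
  have "bilin_form g (alg_mult m x y) z = (\<Sum>l\<in>UNIV. \<Sum>k\<in>UNIV. \<Sum>i\<in>UNIV. \<Sum>j\<in>UNIV. x i * y j * z k * (m i j l * g l k))"
    unfolding alg_mult_def bilin_form_def by (simp add: sum_distrib_left sum_distrib_right mult_ac)
  also have "\<dots> = (\<Sum>k\<in>UNIV. \<Sum>l\<in>UNIV. \<Sum>i\<in>UNIV. \<Sum>j\<in>UNIV. x i * y j * z k * (m i j l * g l k))"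
    by (rule sum.swap)
  also have "\<dots> = (\<Sum>k\<in>UNIV. \<Sum>i\<in>UNIV. \<Sum>l\<in>UNIV. \<Sum>j\<in>UNIV. x i * y j * z k * (m i j l * g l k))"
    by (rule sum.cong[OF refl], rule sum.swap)
  also have "\<dots> = (\<Sum>k\<in>UNIV. \<Sum>i\<in>UNIV. \<Sum>j\<in>UNIV. \<Sum>l\<in>UNIV. x i * y j * z k * (m i j l * g l k))"
    by (rule sum.cong[OF refl], rule sum.cong[OF refl], rule sum.swap)
  also have "\<dots> = (\<Sum>i\<in>UNIV. \<Sum>k\<in>UNIV. \<Sum>j\<in>UNIV. \<Sum>l\<in>UNIV. x i * y j * z k * (m i j l * g l k))"
    by (rule sum.swap)
  also have "\<dots> = (\<Sum>i\<in>UNIV. \<Sum>j\<in>UNIV. \<Sum>k\<in>UNIV. \<Sum>l\<in>UNIV. x i * y j * z k * (m i j l * g l k))"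
    by (rule sum.cong[OF refl], rule sum.swap)
  finally show ?thesis by (simp add: sum_distrib_left)
qed

lemma frobR: "bilin_form g x (alg_mult m y z) = (\<Sum>i\<in>UNIV. \<Sum>j\<in>UNIV. \<Sum>k\<in>UNIV. x i * y j * z k * (\<Sum>l\<in>UNIV. m j k l * g i l))"
proof -
  have "bilin_form g x (alg_mult m y z) = (\<Sum>i\<in>UNIV. \<Sum>l\<in>UNIV. \<Sum>j\<in>UNIV. \<Sum>k\<in>UNIV. x i * y j * z k * (m j k l * g i l))"
    unfolding alg_mult_def bilin_form_def by (simp add: sum_distrib_left sum_distrib_right mult_ac)
  also have "\<dots> = (\<Sum>i\<in>UNIV. \<Sum>j\<in>UNIV. \<Sum>l\<in>UNIV. \<Sum>k\<in>UNIV. x i * y j * z k * (m j k l * g i l))"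
    by (rule sum.cong[OF refl], rule sum.swap)
  also have "\<dots> = (\<Sum>i\<in>UNIV. \<Sum>j\<in>UNIV. \<Sum>k\<in>UNIV. \<Sum>l\<in>UNIV. x i * y j * z k * (m j k l * g i l))"
    by (rule sum.cong[OF refl], rule sum.cong[OF refl], rule sum.swap)
  finally show ?thesis by (simp add: sum_distrib_left)
qed

lemma unitL: "alg_mult m u x n = (\<Sum>j\<in>UNIV. x j * (\<Sum>i\<in>UNIV. u i * m i j n))"
proof -
  have "alg_mult m u x n = (\<Sum>i\<in>UNIV. \<Sum>j\<in>UNIV. x j * (u i * m i j n))"
    unfolding alg_mult_def by (simp add: mult_ac)
  also have "\<dots> = (\<Sum>j\<in>UNIV. \<Sum>i\<in>UNIV. x j * (u i * m i j n))" by (rule sum.swap)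
  finally show ?thesis by (simp add: sum_distrib_left)
qed

lemma unitR: "alg_mult m x u n = (\<Sum>i\<in>UNIV. x i * (\<Sum>j\<in>UNIV. u j * m i j n))"
  unfolding alg_mult_def by (simp add: sum_distrib_left mult_ac)

lemma bilin_col: "bilin_form g x y = (\<Sum>j\<in>UNIV. y j * (\<Sum>i\<in>UNIV. x i * g i j))"
proof -
  have "bilin_form g x y = (\<Sum>i\<in>UNIV. \<Sum>j\<in>UNIV. y j * (x i * g i j))"
    unfolding bilin_form_def by (simp add: mult_ac)
  also have "\<dots> = (\<Sum>j\<in>UNIV. \<Sum>i\<in>UNIV. y j * (x i * g i j))" by (rule sum.swap)
  finally show ?thesis by (simp add: sum_distrib_left)
qed

lemma bilin_row: "bilin_form g x y = (\<Sum>i\<in>UNIV. x i * (\<Sum>j\<in>UNIV. g i j * y j))"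
  unfolding bilin_form_def by (simp add: sum_distrib_left mult_ac)

lemma alg_assoc_coord:
  assumes "is_algebra m u"
  shows "(\<Sum>l\<in>UNIV. m i j l * m l k n) = (\<Sum>l\<in>UNIV. m j k l * m i l (n::'i::finite))"
proof -
  have "alg_mult m (alg_mult m (dl i) (dl j)) (dl k) n = alg_mult m (dl i) (alg_mult m (dl j) (dl k)) n"
    using assms unfolding is_algebra_def by simp
  thus ?thesis unfolding assocL assocR by (simp add: collapse cong: if_cong)
qed

lemma alg_unit_coordL:
  assumes "is_algebra m u"
  shows "(\<Sum>i\<in>UNIV. u i * m i j n) = (if j = (n::'i::finite) then 1 else (0::'k::field))"
proof -
  have "alg_mult m u (dl j) n = dl j n"
    using assms unfolding is_algebra_def by simp
  thus ?thesis unfolding unitL by (simp add: collapse cong: if_cong)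
qed

lemma alg_unit_coordR:
  assumes "is_algebra m u"
  shows "(\<Sum>j\<in>UNIV. u j * m i j n) = (if i = (n::'i::finite) then 1 else (0::'k::field))"
proof -
  have "alg_mult m (dl i) u n = dl i n"
    using assms unfolding is_algebra_def by simp
  thus ?thesis unfolding unitR by (simp add: collapse cong: if_cong)
qed

lemma frob_coord:
  assumes "frobenius m u g"
  shows "(\<Sum>l\<in>UNIV. m i j l * g l k) = (\<Sum>l\<in>UNIV. m j k l * g i (l::'i::finite))"
proof -
  have "bilin_form g (alg_mult m (dl i) (dl j)) (dl k) = bilin_form g (dl i) (alg_mult m (dl j) (dl k))"
    using assms unfolding frobenius_def by simp
  thus ?thesis unfolding frobL frobR by (simp add: collapse cong: if_cong)
qed

lemma is_algebra_coord:
  assumes "\<And>i j k n. (\<Sum>l\<in>UNIV. m i j l * m l k n) = (\<Sum>l\<in>UNIV. m j k l * m i l (n::'i::finite))"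
    and "\<And>j n. (\<Sum>i\<in>UNIV. u i * m i j n) = (if j = n then 1 else (0::'k::field))"
    and "\<And>i n. (\<Sum>j\<in>UNIV. u j * m i j n) = (if i = n then 1 else 0)"
  shows "is_algebra m u"
  unfolding is_algebra_def
proof (intro conjI allI)
  fix x y z
  show "alg_mult m (alg_mult m x y) z = alg_mult m x (alg_mult m y z)"
    by (rule ext) (simp only: assocL assocR assms(1))
next
  fix x
  show "alg_mult m u x = x" by (rule ext) (simp add: unitL assms(2) collapse cong: if_cong)
  show "alg_mult m x u = x" by (rule ext) (simp add: unitR assms(3) collapse cong: if_cong)
qed

lemma frob_form_coord:
  assumes "\<And>i j k. (\<Sum>l\<in>UNIV. m i j l * g l k) = (\<Sum>l\<in>UNIV. m j k l * g i (l::'i::finite))"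
  shows "bilin_form g (alg_mult m x y) z = bilin_form g x (alg_mult m y z)"
  by (simp only: frobL frobR assms)

lemma nd_left:
  assumes "nondegenerate g" "\<And>k. (\<Sum>i\<in>UNIV. x i * g i k) = 0"
  shows "x = (\<lambda>_. 0)"
  using assms unfolding nondegenerate_def bilin_col by simp

lemma nd_right:
  assumes "nondegenerate g" "\<And>i. (\<Sum>j\<in>UNIV. g i j * y j) = 0"
  shows "y = (\<lambda>_. 0)"
  using assms unfolding nondegenerate_def bilin_row by simp

lemma nd_coord:
  assumes "\<And>x. (\<forall>k. (\<Sum>i\<in>UNIV. x i * g i k) = 0) \<Longrightarrow> x = (\<lambda>_. 0)"
    and "\<And>y. (\<forall>i. (\<Sum>j\<in>UNIV. g i j * y j) = 0) \<Longrightarrow> y = (\<lambda>_. 0)"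
  shows "nondegenerate (g :: 'i::finite \<Rightarrow> 'i \<Rightarrow> 'k::field)"
  unfolding nondegenerate_def
proof (intro conjI allI impI)
  fix x assume H: "\<forall>y. bilin_form g x y = 0"
  show "x = (\<lambda>_. 0)"
  proof (rule assms(1), intro allI)
    fix k have "bilin_form g x (dl k) = 0" using H by simp
    thus "(\<Sum>i\<in>UNIV. x i * g i k) = 0" unfolding bilin_col by (simp add: collapse cong: if_cong)
  qed
next
  fix y assume H: "\<forall>x. bilin_form g x y = 0"
  show "y = (\<lambda>_. 0)"
  proof (rule assms(2), intro allI)
    fix i have "bilin_form g (dl i) y = 0" using H by simp
    thus "(\<Sum>j\<in>UNIV. g i j * y j) = 0" unfolding bilin_row by (simp add: collapse cong: if_cong)
  qed
qed


lemma bichar_0R: assumes "bicharacter t" shows "t a 0 = (1::'k::field)"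
proof -
  have "t a 0 = t a 0 * t a 0" using assms unfolding bicharacter_def by (metis add_0)
  moreover have "t a 0 \<noteq> 0" using assms unfolding bicharacter_def by blast
  ultimately show ?thesis by (metis mult_cancel_left1)
qed

lemma bichar_0L: assumes "bicharacter t" shows "t 0 b = (1::'k::field)"
proof -
  have "t 0 b = t 0 b * t 0 b" using assms unfolding bicharacter_def by (metis add_0)
  moreover have "t 0 b \<noteq> 0" using assms unfolding bicharacter_def by blast
  ultimately show ?thesis by (metis mult_cancel_left1)
qed

lemma unit_deg0:
  assumes "is_graded_algebra (m::'i::finite \<Rightarrow> 'i \<Rightarrow> 'i \<Rightarrow> 'k::field) u deg" "u n \<noteq> 0"
  shows "deg n = 0"
proof -
  have alg: "is_algebra m u" and gr: "\<And>i j l. m i j l \<noteq> 0 \<Longrightarrow> deg l = deg i + deg j"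
    using assms(1) unfolding is_graded_algebra_def by auto
  define u0 where "u0 = (\<lambda>i. if deg i = 0 then u i else (0::'k))"
  have L0: "(\<Sum>i\<in>UNIV. u0 i * m i j n) = (if j = n then 1 else 0)" for j n
  proof (cases "deg n = deg j")
    case True
    have e: "u0 i * m i j n = u i * m i j n" for i
      using gr[of i j n] True by (auto simp: u0_def)
    have "(\<Sum>i\<in>UNIV. u0 i * m i j n) = (\<Sum>i\<in>UNIV. u i * m i j n)" by (rule sum.cong[OF refl], rule e)
    then show ?thesis using alg_unit_coordL[OF alg] by simp
  next
    case False
    have e: "u0 i * m i j n = 0" for i
      using gr[of i j n] False by (auto simp: u0_def)
    have "(\<Sum>i\<in>UNIV. u0 i * m i j n) = 0" by (rule sum.neutral) (simp add: e)
    then show ?thesis using False by auto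
  qed
  have "(\<Sum>i\<in>UNIV. u0 i * (\<Sum>j\<in>UNIV. u j * m i j n)) = (\<Sum>j\<in>UNIV. u j * (\<Sum>i\<in>UNIV. u0 i * m i j n))"
    by (simp add: sum_distrib_left mult_ac) (rule sum.swap)
  hence "u0 n = u n" by (simp add: alg_unit_coordR[OF alg] L0 collapse cong: if_cong)
  thus ?thesis using assms(2) by (auto simp: u0_def split: if_splits)
qed

lemma grade_rw:
  assumes "is_graded_algebra m u deg"
  shows "m a b n * f (deg n) = m a b n * f (deg a + deg b)"
  using assms unfolding is_graded_algebra_def by (cases "m a b n = 0") auto


lemma sep: "(\<Sum>a\<in>A. \<Sum>b\<in>B. c * X a * Y b) = c * (\<Sum>a\<in>A. X a) * (\<Sum>b\<in>B. (Y b :: 'k::field))"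
  by (simp add: sum_distrib_left sum_distrib_right mult_ac)

theorem mainTheorem3:
  fixes mR :: "'i::finite \<Rightarrow> 'i \<Rightarrow> 'i \<Rightarrow> 'k::field" and uR :: "'i \<Rightarrow> 'k"
    and degR :: "'i \<Rightarrow> 'a::ab_group_add" and gR :: "'i \<Rightarrow> 'i \<Rightarrow> 'k"
    and mS :: "'j::finite \<Rightarrow> 'j \<Rightarrow> 'j \<Rightarrow> 'k" and uS :: "'j \<Rightarrow> 'k"
    and degS :: "'j \<Rightarrow> 'b::ab_group_add" and gS :: "'j \<Rightarrow> 'j \<Rightarrow> 'k"
    and t :: "'a \<Rightarrow> 'b \<Rightarrow> 'k"
  assumes "is_graded_algebra mR uR degR" and "frobenius mR uR gR"
    and "is_graded_algebra mS uS degS" and "frobenius mS uS gS"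
    and "bicharacter t"
  shows "frobenius (twisted_mult t degR degS mR mS) (tensor_unit uR uS)
           (twisted_form t degR degS gR gS)"
proof -
  note grR = assms(1) and fR = assms(2) and grS = assms(3) and fS = assms(4) and bi = assms(5)
  have algR: "is_algebra mR uR" and algS: "is_algebra mS uS"
    using fR fS unfolding frobenius_def by auto
  have ndR: "nondegenerate gR" and ndS: "nondegenerate gS"
    using fR fS unfolding frobenius_def by auto
  have dR: "mR a b c \<noteq> 0 \<Longrightarrow> degR c = degR a + degR b" for a b c
    using grR unfolding is_graded_algebra_def by auto
  have dS: "mS a b c \<noteq> 0 \<Longrightarrow> degS c = degS a + degS b" for a b c
    using grS unfolding is_graded_algebra_def by auto
  have tL: "t (a + a') b = t a b * t a' b" and tR: "t a (b + b') = t a b * t a b'" for a a' b b'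
    using bi unfolding bicharacter_def by auto
  have tnz: "t a b \<noteq> 0" for a b using bi unfolding bicharacter_def by auto
  define T where "T = twisted_mult t degR degS mR mS"
  define U where "U = tensor_unit uR uS"
  define G where "G = twisted_form t degR degS gR gS"
  have Tv: "T (i,j) (i',j') (l,n) = t (degR i') (degS j) * mR i i' l * mS j j' n" for i j i' j' l n
    by (simp add: T_def twisted_mult_def)
  have Uv: "U (i,j) = uR i * uS j" for i j by (simp add: U_def tensor_unit_def)
  have Gv: "G (i,j) (i',j') = t (degR i') (degS j) * gR i i' * gS j j'" for i j i' j'
    by (simp add: G_def twisted_form_def)

  have assocT: "(\<Sum>l\<in>UNIV. T p1 p2 l * T l p3 q) = (\<Sum>l\<in>UNIV. T p2 p3 l * T p1 l q)" for p1 p2 p3 q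
  proof -
    obtain i1 j1 i2 j2 i3 j3 l' n' where P: "p1 = (i1,j1)" "p2 = (i2,j2)" "p3 = (i3,j3)" "q = (l',n')"
      by (metis surj_pair)
    define C where "C = t (degR i2) (degS j1) * t (degR i3) (degS j1) * t (degR i3) (degS j2)"
    have e1: "T (i1,j1) (i2,j2) (l,n) * T (l,n) (i3,j3) (l',n') = C * (mR i1 i2 l * mR l i3 l') * (mS j1 j2 n * mS n j3 n')" for l n
      by (cases "mS j1 j2 n = 0") (auto simp: Tv C_def dS tR mult_ac)
    have e2: "T (i2,j2) (i3,j3) (l,n) * T (i1,j1) (l,n) (l',n') = C * (mR i2 i3 l * mR i1 l l') * (mS j2 j3 n * mS j1 n n')" for l n
      by (cases "mR i2 i3 l = 0") (auto simp: Tv C_def dR tL mult_ac)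
    show ?thesis unfolding P sum_pair e1 e2 sep
      using alg_assoc_coord[OF algR, of i1 i2 i3 l'] alg_assoc_coord[OF algS, of j1 j2 j3 n'] by simp
  qed

  have unitTL: "(\<Sum>p\<in>UNIV. U p * T p p2 q) = (if p2 = q then 1 else 0)" for p2 q
  proof -
    obtain i2 j2 l n where P: "p2 = (i2,j2)" "q = (l,n)" by (metis surj_pair)
    have e: "U (i,j) * T (i,j) (i2,j2) (l,n) = 1 * (uR i * mR i i2 l) * (uS j * mS j j2 n)" for i j
    proof (cases "uS j = 0")
      case False
      hence "degS j = 0" using unit_deg0[OF grS] by blast
      thus ?thesis by (simp add: Uv Tv bichar_0R[OF bi] mult_ac)
    qed (simp add: Uv Tv)
    show ?thesis unfolding P sum_pair e sep
      by (simp add: alg_unit_coordL[OF algR] alg_unit_coordL[OF algS])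
  qed

  have unitTR: "(\<Sum>p\<in>UNIV. U p * T p1 p q) = (if p1 = q then 1 else 0)" for p1 q
  proof -
    obtain i j l n where P: "p1 = (i,j)" "q = (l,n)" by (metis surj_pair)
    have e: "U (i2,j2) * T (i,j) (i2,j2) (l,n) = 1 * (uR i2 * mR i i2 l) * (uS j2 * mS j j2 n)" for i2 j2
    proof (cases "uR i2 = 0")
      case False
      hence "degR i2 = 0" using unit_deg0[OF grR] by blast
      thus ?thesis by (simp add: Uv Tv bichar_0L[OF bi] mult_ac)
    qed (simp add: Uv Tv)
    show ?thesis unfolding P sum_pair e sep
      by (simp add: alg_unit_coordR[OF algR] alg_unit_coordR[OF algS])
  qed

  have frobT: "(\<Sum>l\<in>UNIV. T p1 p2 l * G l p3) = (\<Sum>l\<in>UNIV. T p2 p3 l * G p1 l)" for p1 p2 p3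
  proof -
    obtain i1 j1 i2 j2 i3 j3 where P: "p1 = (i1,j1)" "p2 = (i2,j2)" "p3 = (i3,j3)"
      by (metis surj_pair)
    define C where "C = t (degR i2) (degS j1) * t (degR i3) (degS j1) * t (degR i3) (degS j2)"
    have e1: "T (i1,j1) (i2,j2) (l,n) * G (l,n) (i3,j3) = C * (mR i1 i2 l * gR l i3) * (mS j1 j2 n * gS n j3)" for l n
      by (cases "mS j1 j2 n = 0") (auto simp: Tv Gv C_def dS tR mult_ac)
    have e2: "T (i2,j2) (i3,j3) (l,n) * G (i1,j1) (l,n) = C * (mR i2 i3 l * gR i1 l) * (mS j2 j3 n * gS j1 n)" for l n
      by (cases "mR i2 i3 l = 0") (auto simp: Tv Gv C_def dR tL mult_ac)
    show ?thesis unfolding P sum_pair e1 e2 sep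
      using frob_coord[OF fR, of i1 i2 i3] frob_coord[OF fS, of j1 j2 j3] by simp
  qed

  have algT: "is_algebra T U"
    by (rule is_algebra_coord) (use assocT unitTL unitTR in \<open>auto simp: mult.commute\<close>)

  have ndT: "nondegenerate G"
  proof (rule nd_coord)
    fix x :: "'i \<times> 'j \<Rightarrow> 'k"
    assume H: "\<forall>k. (\<Sum>i\<in>UNIV. x i * G i k) = 0"
    have A: "(\<Sum>i\<in>UNIV. x (i,j) * gR i i') = 0" for i' j
    proof -
      define a where "a = (\<lambda>j. (\<Sum>i\<in>UNIV. x (i,j) * gR i i') * t (degR i') (degS j))"
      have "(\<Sum>j\<in>UNIV. a j * gS j j') = 0" for j'
      proof -
        have "(\<Sum>j\<in>UNIV. a j * gS j j') = (\<Sum>j\<in>UNIV. \<Sum>i\<in>UNIV. x (i,j) * G (i,j) (i',j'))"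
          by (simp add: a_def Gv sum_distrib_left sum_distrib_right mult_ac)
        also have "\<dots> = (\<Sum>p\<in>UNIV. x p * G p (i',j'))" by (simp add: sum_pair) (rule sum.swap)
        finally show ?thesis using H by simp
      qed
      hence "a = (\<lambda>_. 0)" by (intro nd_left[OF ndS]) 
      hence "a j = 0" by simp
      thus ?thesis using tnz by (simp add: a_def)
    qed
    show "x = (\<lambda>_. 0)"
    proof
      fix p :: "'i \<times> 'j" obtain i j where P: "p = (i,j)" by (metis surj_pair)
      have "(\<lambda>i. x (i,j)) = (\<lambda>_. 0)" by (rule nd_left[OF ndR], rule A)
      thus "x p = 0" unfolding P by metis
    qed
  next
    fix y :: "'i \<times> 'j \<Rightarrow> 'k"
    assume H: "\<forall>i. (\<Sum>j\<in>UNIV. G i j * y j) = 0"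
    have A: "(\<Sum>j'\<in>UNIV. gS j j' * y (i',j')) = 0" for i' j
    proof -
      define b where "b = (\<lambda>i'. t (degR i') (degS j) * (\<Sum>j'\<in>UNIV. gS j j' * y (i',j')))"
      have "(\<Sum>i'\<in>UNIV. gR i i' * b i') = 0" for i
      proof -
        have "(\<Sum>i'\<in>UNIV. gR i i' * b i') = (\<Sum>p\<in>UNIV. G (i,j) p * y p)"
          by (simp add: b_def Gv sum_pair sum_distrib_left mult_ac)
        thus ?thesis using H by simp
      qed
      hence "b = (\<lambda>_. 0)" by (intro nd_right[OF ndR])
      hence "b i' = 0" by simp
      thus ?thesis using tnz by (simp add: b_def)
    qed
    show "y = (\<lambda>_. 0)"
    proof
      fix p :: "'i \<times> 'j" obtain i j where P: "p = (i,j)" by (metis surj_pair)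
      have "(\<lambda>j. y (i,j)) = (\<lambda>_. 0)" by (rule nd_right[OF ndS], rule A)
      thus "y p = 0" unfolding P by metis
    qed
  qed

  have fT: "bilin_form G (alg_mult T x y) z = bilin_form G x (alg_mult T y z)" for x y z
    by (rule frob_form_coord) (rule frobT)

  show ?thesis unfolding frobenius_def T_def[symmetric] U_def[symmetric] G_def[symmetric]
    using algT ndT fT by blast
qed

end
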